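(* Let $D$ be a tournament missing disjoint paths of length 2 and let $C=a_1b_1c_1,\dots,a_kb_kc_k$ be a double cycle in $\Delta(D)$. For each $i\in\{1,\dots,k\}$ choose $\{x_i,y_i\}=\{a_i,b_i\}$ or $\{x_i,y_i\}=\{b_i,c_i\}$ (with either labelling). Then for all $j\in\{1,\dots,k\}$ and all $i\neq j$: (1) $x_j\to x_i$ if and only if $y_i\to x_j$; (2) $x_j\to y_i$ if and only if $x_i\to x_j$; (3) $y_j\to x_i$ if and only if $y_i\to y_j$; (4) $y_j\to y_i$ if and only if $x_i\to y_j$.
   Context: All digraphs are finite oriented graphs. $N^+(v)$ is the out-neighborhood; $N^{++}(v)$ is the set of vertices $w\notin N^+(v)\cup\{v\}$ with $u\to w$ for some $u\in N^+(v)$. A missing edge is a pair of distinct non-adjacent vertices; the missing graph is formed by the missing edges. $D$ is a tournament missing disjoint paths of length 2 if its missing graph is a vertex-disjoint union of paths each with exactly two edges. For missing edges $\{x,y\},\{a,b\}$, $\{x,y\}$ loses to $\{a,b\}$ (written $xy\to ab$) if the endpoints can be labelled so that $x\to a$, $b\notin N^+(x)\cup N^{++}(x)$, $y\to b$, $a\notin N^+(y)\cup N^{++}(y)$. $\Delta(D)$ has the missing edges as vertices and arcs $(e,e')$ whenever $e$ loses to $e'$. For missing paths $abc$, $xyz$ (edges $ab,bc$ and $xy,yz$), $abc\to xyz$ means each of $ab,bc$ loses to each of $xy,yz$. A double cycle is a sequence $C=a_1b_1c_1,\dots,a_kb_kc_k$ ($k\ge2$) of distinct missing paths of length 2 (components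 of the missing graph) with $a_ib_ic_i\to a_{i+1}b_{i+1}c_{i+1}$ for all $i$, indices modulo $k$. *)

theory Defs
  imports Main
begin

definition oriented_graph :: "'a set \<Rightarrow> ('a \<Rightarrow> 'a \<Rightarrow> bool) \<Rightarrow> bool" where
  "oriented_graph V A \<longleftrightarrow> finite V \<and> (\<forall>u v. A u v \<longrightarrow> u \<in> V \<and> v \<in> V)
     \<and> (\<forall>v. \<not> A v v) \<and> (\<forall>u v. A u v \<longrightarrow> \<not> A v u)"

definition out_nbhd :: "'a set \<Rightarrow> ('a \<Rightarrow> 'a \<Rightarrow> bool) \<Rightarrow> 'a \<Rightarrow> 'a set" where
  "out_nbhd V A v = {w \<in> V. A v w}"

definition second_out_nbhd :: "'a set \<Rightarrow> ('a \<Rightarrow> 'a \<Rightarrow> bool) \<Rightarrow> 'a \<Rightarrow> 'a set" where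
  "second_out_nbhd V A v =
     {w \<in> V. w \<notin> out_nbhd V A v \<and> w \<noteq> v \<and> (\<exists>u \<in> out_nbhd V A v. A u w)}"

definition missing :: "'a set \<Rightarrow> ('a \<Rightarrow> 'a \<Rightarrow> bool) \<Rightarrow> 'a \<Rightarrow> 'a \<Rightarrow> bool" where
  "missing V A x y \<longleftrightarrow> x \<in> V \<and> y \<in> V \<and> x \<noteq> y \<and> \<not> A x y \<and> \<not> A y x"

text \<open>a b c is a component of the missing graph which is a path with edges ab, bc.\<close>
definition missing_path :: "'a set \<Rightarrow> ('a \<Rightarrow> 'a \<Rightarrow> bool) \<Rightarrow> 'a \<Rightarrow> 'a \<Rightarrow> 'a \<Rightarrow> bool" where
  "missing_path V A a b c \<longleftrightarrow> missing V A a b \<and> missing V A b c \<and> a \<noteq> c \<and> \<not> missing V A a c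
     \<and> (\<forall>z. missing V A a z \<longrightarrow> z = b) \<and> (\<forall>z. missing V A c z \<longrightarrow> z = b)
     \<and> (\<forall>z. missing V A b z \<longrightarrow> z = a \<or> z = c)"

definition tournament_missing_P2 :: "'a set \<Rightarrow> ('a \<Rightarrow> 'a \<Rightarrow> bool) \<Rightarrow> bool" where
  "tournament_missing_P2 V A \<longleftrightarrow> oriented_graph V A \<and>
     (\<forall>x y. missing V A x y \<longrightarrow> (\<exists>a b c. missing_path V A a b c \<and> {x, y} \<subseteq> {a, b, c}))"

text \<open>Missing edge e loses to missing edge e' (vertices of Delta(D) and its arcs).\<close>
definition loses :: "'a set \<Rightarrow> ('a \<Rightarrow> 'a \<Rightarrow> bool) \<Rightarrow> 'a set \<Rightarrow> 'a set \<Rightarrow> bool" where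
  "loses V A e e' \<longleftrightarrow> (\<exists>x y a b. e = {x, y} \<and> e' = {a, b} \<and> missing V A x y \<and> missing V A a b
     \<and> A x a \<and> b \<notin> out_nbhd V A x \<union> second_out_nbhd V A x
     \<and> A y b \<and> a \<notin> out_nbhd V A y \<union> second_out_nbhd V A y)"

definition path_loses :: "'a set \<Rightarrow> ('a \<Rightarrow> 'a \<Rightarrow> bool) \<Rightarrow> 'a \<times> 'a \<times> 'a \<Rightarrow> 'a \<times> 'a \<times> 'a \<Rightarrow> bool" where
  "path_loses V A p q \<longleftrightarrow> (case p of (a, b, c) \<Rightarrow> case q of (x, y, z) \<Rightarrow>
     (\<forall>e \<in> {{a, b}, {b, c}}. \<forall>e' \<in> {{x, y}, {y, z}}. loses V A e e'))"

text \<open>Double cycle a_0 b_0 c_0, ..., a_{k-1} b_{k-1} c_{k-1} (0-indexed, indices mod k).\<close>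
definition double_cycle :: "'a set \<Rightarrow> ('a \<Rightarrow> 'a \<Rightarrow> bool) \<Rightarrow> nat \<Rightarrow> (nat \<Rightarrow> 'a) \<Rightarrow> (nat \<Rightarrow> 'a) \<Rightarrow> (nat \<Rightarrow> 'a) \<Rightarrow> bool" where
  "double_cycle V A k a b c \<longleftrightarrow> 2 \<le> k
     \<and> (\<forall>i < k. missing_path V A (a i) (b i) (c i))
     \<and> (\<forall>i < k. \<forall>j < k. i \<noteq> j \<longrightarrow> {a i, b i, c i} \<noteq> {a j, b j, c j})
     \<and> (\<forall>i < k. path_loses V A (a i, b i, c i) (a ((i + 1) mod k), b ((i + 1) mod k), c ((i + 1) mod k)))"

end

theory Submission
  imports Defs
begin

lemma mod2k: "(x::nat) < 2*k \<Longrightarrow> x mod k = (if x<k then x else x-k)"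
  by (simp add: mod_if)

lemma A1: "(s::nat)<k \<Longrightarrow> t<k \<Longrightarrow> (s + (t + k - s) mod k) mod k = t"
proof -
  assume h: "s<k" "t<k"
  have "(s + (t + k - s) mod k) mod k = (s + (t + k - s)) mod k" by (simp add: mod_add_right_eq)
  also have "s + (t + k - s) = t + k" using h by simp
  finally show ?thesis using h by simp
qed

lemma A2: "(s::nat)<k \<Longrightarrow> t<k \<Longrightarrow> n' < (t + k - s) mod k \<Longrightarrow> (s+n') mod k \<noteq> t"
proof -
  assume h: "s<k" "t<k" "n' < (t + k - s) mod k"
  have r: "(t + k - s) mod k = (if s \<le> t then t - s else t + k - s)"
    using h(1,2) mod2k[of "t+k-s" k] by auto
  have "s + n' < 2*k" using h r by (auto split: if_splits)
  then show ?thesis using h r mod2k[of "s+n'" k] by (auto split: if_splits)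
qed

lemma A3: "(t::nat)<k \<Longrightarrow> n'<k-1 \<Longrightarrow> ((t+1) mod k + n') mod k \<noteq> t"
proof -
  assume h: "t<k" "n'<k-1"
  have "((t+1) mod k + n') mod k = (t+1+n') mod k" by (simp add: mod_add_left_eq)
  moreover have "t+1+n' < 2*k" using h by simp
  ultimately show ?thesis using h mod2k[of "t+1+n'" k] by (auto split: if_splits)
qed


lemma msym: "missing V A u v \<Longrightarrow> missing V A v u"
  unfolding missing_def by auto

definition cl :: "'a set \<Rightarrow> ('a \<Rightarrow> 'a \<Rightarrow> bool) \<Rightarrow> 'a \<Rightarrow> 'a set" where
  "cl V A v = {w. w = v \<or> missing V A v w \<or> (\<exists>u. missing V A v u \<and> missing V A u w)}"

lemma path_cl:
  assumes "missing_path V A a b c" "v \<in> {a,b,c}"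
  shows "{a,b,c} = cl V A v"
proof -
  have Na: "\<And>z. missing V A a z \<longleftrightarrow> z = b" using assms(1) unfolding missing_path_def by blast
  have Nc: "\<And>z. missing V A c z \<longleftrightarrow> z = b" using assms(1) unfolding missing_path_def by (blast intro: msym)
  have Nb: "\<And>z. missing V A b z \<longleftrightarrow> z = a \<or> z = c" using assms(1) unfolding missing_path_def by (blast intro: msym)
  have ac: "a \<noteq> c" using assms(1) unfolding missing_path_def by blast
  from assms(2) consider "v = a" | "v = b" | "v = c" by blast
  then show ?thesis
    by cases (auto simp: cl_def Na Nb Nc ac)
qed

locale dc =
  fixes V :: "'a set" and A :: "'a \<Rightarrow> 'a \<Rightarrow> bool" and k :: nat and a b c :: "nat \<Rightarrow> 'a"
  assumes T: "tournament_missing_P2 V A" and D: "double_cycle V A k a b c"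
begin

definition cmp where "cmp m = {a m, b m, c m}"
definition Es where "Es m = {{a m, b m}, {b m, c m}}"
definition nx where "nx m = (m+1) mod k"

lemma k2: "2 \<le> k" using D unfolding double_cycle_def by blast
lemma og: "oriented_graph V A" using T unfolding tournament_missing_P2_def by blast
lemma asym: "A u v \<Longrightarrow> \<not> A v u" using og unfolding oriented_graph_def by blast
lemma path: "m<k \<Longrightarrow> missing_path V A (a m) (b m) (c m)" using D unfolding double_cycle_def by blast
lemma distinct_comps: "m<k \<Longrightarrow> n<k \<Longrightarrow> m\<noteq>n \<Longrightarrow> cmp m \<noteq> cmp n"
  using D unfolding double_cycle_def cmp_def by blast

lemma cmp_cl: assumes "m<k" "v \<in> cmp m" shows "cmp m = cl V A v"
  using path_cl[OF path[OF assms(1)]] assms(2) unfolding cmp_def by simp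

lemma cmp_disj: assumes "m<k" "n<k" "v \<in> cmp m" "v \<in> cmp n" shows "m = n"
proof -
  have "cmp m = cmp n" using cmp_cl[OF assms(1,3)] cmp_cl[OF assms(2,4)] by simp
  then show ?thesis using distinct_comps assms by blast
qed

lemma cmp_V: "m<k \<Longrightarrow> cmp m \<subseteq> V"
  using path[of m] unfolding cmp_def missing_path_def missing_def by blast

lemma adj:
  assumes "m<k" "n<k" "m\<noteq>n" "u\<in>cmp m" "v\<in>cmp n"
  shows "A u v \<or> A v u"
proof -
  have "u \<noteq> v" using assms cmp_disj by blast
  moreover have "\<not> missing V A u v"
  proof
    assume "missing V A u v"
    then have "v \<in> cl V A u" unfolding cl_def by blast
    then have "v \<in> cmp m" using cmp_cl assms by blast
    then show False using assms cmp_disj by blast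
  qed
  moreover have "u \<in> V" "v \<in> V" using assms cmp_V by blast+
  ultimately show ?thesis unfolding missing_def by blast
qed

lemma nx_lt: "nx m < k" unfolding nx_def using k2 by simp

lemma nxv: "m<k \<Longrightarrow> nx m = (if m+1 = k then 0 else m+1)"
  unfolding nx_def by auto

lemma nx_neq: "m<k \<Longrightarrow> nx m \<noteq> m"
  using k2 by (auto simp: nxv)

lemma nx_inj: "m<k \<Longrightarrow> t<k \<Longrightarrow> nx m = nx t \<Longrightarrow> m = t"
  by (auto simp: nxv split: if_splits)

lemma E_sub: "e\<in>Es m \<Longrightarrow> e \<subseteq> cmp m" unfolding Es_def cmp_def by auto
lemma cmp_cover: "v \<in> cmp m \<Longrightarrow> \<exists>e\<in>Es m. v \<in> e" unfolding Es_def cmp_def by auto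

lemma loses_E: "m<k \<Longrightarrow> e\<in>Es m \<Longrightarrow> e'\<in>Es (nx m) \<Longrightarrow> loses V A e e'"
  using D unfolding double_cycle_def path_loses_def Es_def nx_def by auto

lemma loses_cons:
  assumes "m<k" "e \<in> Es m" "e' \<in> Es (nx m)"
  shows "\<exists>x y p q. e={x,y} \<and> e'={p,q} \<and> A x p \<and> A q x \<and> A y q \<and> A p y \<and>
    (\<forall>z. z\<in>V \<longrightarrow> A x z \<longrightarrow> \<not> A z q) \<and> (\<forall>z. z\<in>V \<longrightarrow> A y z \<longrightarrow> \<not> A z p)"
proof -
  have "loses V A e e'" using loses_E assms by blast
  then obtain x y p q where e: "e = {x,y}" "e' = {p,q}" and xp: "A x p"
    and q: "q \<notin> out_nbhd V A x \<union> second_out_nbhd V A x" and yq: "A y q"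
    and p: "p \<notin> out_nbhd V A y \<union> second_out_nbhd V A y"
    unfolding loses_def by blast
  have xy: "x \<in> cmp m" "y \<in> cmp m" using e(1) E_sub[OF assms(2)] by blast+
  have pq: "p \<in> cmp (nx m)" "q \<in> cmp (nx m)" using e(2) E_sub[OF assms(3)] by blast+
  have nm: "nx m \<noteq> m" "nx m < k" by (rule nx_neq[OF assms(1)], rule nx_lt)
  have V: "p \<in> V" "q \<in> V" using pq cmp_V[OF nm(2)] by blast+
  have ne1: "x \<noteq> q"
  proof
    assume "x = q"
    then have "x \<in> cmp (nx m)" using pq(2) by simp
    then have "m = nx m" by (rule cmp_disj[OF assms(1) nm(2) xy(1)])
    then show False using nm(1) by simp
  qed
  have ne2: "y \<noteq> p"
  proof
    assume "y = p"
    then have "y \<in> cmp (nx m)" using pq(1) by simp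
    then have "m = nx m" by (rule cmp_disj[OF assms(1) nm(2) xy(2)])
    then show False using nm(1) by simp
  qed
  note ne = ne1 ne2
  have "\<not> A x q" using q V unfolding out_nbhd_def by auto
  then have qx: "A q x" using adj[OF assms(1) nm(2) nm(1)[symmetric] xy(1) pq(2)] by blast
  have "\<not> A y p" using p V unfolding out_nbhd_def by auto
  then have py: "A p y" using adj[OF assms(1) nm(2) nm(1)[symmetric] xy(2) pq(1)] by blast
  have q1: "q \<notin> second_out_nbhd V A x" and q2: "\<not> A x q" using q V(2) unfolding out_nbhd_def by auto
  have p1: "p \<notin> second_out_nbhd V A y" and p2: "\<not> A y p" using p V(1) unfolding out_nbhd_def by auto
  have d1: "\<forall>z. z\<in>V \<longrightarrow> A x z \<longrightarrow> \<not> A z q"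
  proof (intro allI impI notI)
    fix z assume z: "z\<in>V" "A x z" "A z q"
    have "z \<in> out_nbhd V A x" using z unfolding out_nbhd_def by simp
    then have "q \<in> second_out_nbhd V A x" unfolding second_out_nbhd_def
      using V(2) q2 ne(1) z(3) unfolding out_nbhd_def by blast
    then show False using q1 by contradiction
  qed
  have d2: "\<forall>z. z\<in>V \<longrightarrow> A y z \<longrightarrow> \<not> A z p"
  proof (intro allI impI notI)
    fix z assume z: "z\<in>V" "A y z" "A z p"
    have "z \<in> out_nbhd V A y" using z unfolding out_nbhd_def by simp
    then have "p \<in> second_out_nbhd V A y" unfolding second_out_nbhd_def
      using V(1) p2 ne(2) z(3) unfolding out_nbhd_def by blast
    then show False using p1 by contradiction
  qed
  show ?thesis
    by (rule exI[of _ x], rule exI[of _ y], rule exI[of _ p], rule exI[of _ q])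
       (intro conjI e xp qx yq py d1 d2)
qed

lemma split1:
  assumes "m<k" "{u,w} \<in> Es m" "v \<in> cmp (nx m)"
  shows "\<not> (A u v \<and> A w v) \<and> \<not> (A v u \<and> A v w)"
proof -
  obtain e' where e': "e' \<in> Es (nx m)" "v \<in> e'" using cmp_cover assms by blast
  obtain x y p q where h: "{u,w}={x,y}" "e'={p,q}" "A x p" "A q x" "A y q" "A p y"
    "\<forall>z. z\<in>V \<longrightarrow> A x z \<longrightarrow> \<not> A z q" "\<forall>z. z\<in>V \<longrightarrow> A y z \<longrightarrow> \<not> A z p"
    using loses_cons[OF assms(1,2) e'(1)] by blast
  have uw: "(u=x \<and> w=y) \<or> (u=y \<and> w=x)" using h(1) by (simp add: doubleton_eq_iff)
  have vpq: "v=p \<or> v=q" using e'(2) h(2) by simp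
  have n: "\<not> A p x" "\<not> A y p" "\<not> A x q" "\<not> A q y" using h(3-6) asym by blast+
  show ?thesis using uw vpq n h(3-6) by blast
qed

lemma split2:
  assumes "m<k" "{u,w} \<in> Es (nx m)" "v \<in> cmp m"
  shows "\<not> (A u v \<and> A w v) \<and> \<not> (A v u \<and> A v w)"
proof -
  obtain e where e: "e \<in> Es m" "v \<in> e" using cmp_cover assms by blast
  obtain x y p q where h: "e={x,y}" "{u,w}={p,q}" "A x p" "A q x" "A y q" "A p y"
    "\<forall>z. z\<in>V \<longrightarrow> A x z \<longrightarrow> \<not> A z q" "\<forall>z. z\<in>V \<longrightarrow> A y z \<longrightarrow> \<not> A z p"
    using loses_cons[OF assms(1) e(1) assms(2)] by blast
  have uw: "(u=p \<and> w=q) \<or> (u=q \<and> w=p)" using h(2) by (simp add: doubleton_eq_iff)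
  have vpq: "v=x \<or> v=y" using e(2) h(1) by simp
  have n: "\<not> A p x" "\<not> A y p" "\<not> A x q" "\<not> A q y" using h(3-6) asym by blast+
  show ?thesis using uw vpq n h(3-6) by blast
qed

lemma fwd:
  assumes "m<k" "{u,w} \<in> Es m" "A u z" "A w z" "j<k" "z \<in> cmp j" "j \<noteq> nx m"
  shows "\<forall>v\<in>cmp (nx m). A v z"
proof
  fix v assume v: "v \<in> cmp (nx m)"
  obtain e' where e': "e' \<in> Es (nx m)" "v \<in> e'" using cmp_cover v by blast
  obtain x y p q where h: "{u,w}={x,y}" "e'={p,q}" "A x p" "A q x" "A y q" "A p y"
    "\<forall>z. z\<in>V \<longrightarrow> A x z \<longrightarrow> \<not> A z q" "\<forall>z. z\<in>V \<longrightarrow> A y z \<longrightarrow> \<not> A z p"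
    using loses_cons[OF assms(1,2) e'(1)] by blast
  have zV: "z \<in> V" using assms cmp_V by blast
  have pq: "p \<in> cmp (nx m)" "q \<in> cmp (nx m)" using h e' E_sub by blast+
  have "A x z" "A y z" using h(1) assms(3,4) by (auto simp: doubleton_eq_iff)
  then have "\<not> A z q" "\<not> A z p" using h(7,8) zV by blast+
  then have "A q z" "A p z"
    using adj[OF nx_lt assms(5) assms(7)[symmetric] pq(2) assms(6)]
      adj[OF nx_lt assms(5) assms(7)[symmetric] pq(1) assms(6)] by blast+
  then show "A v z" using h(2) e'(2) by auto
qed

lemma bwd:
  assumes "m<k" "{u,w} \<in> Es (nx m)" "A z u" "A z w" "j<k" "z \<in> cmp j" "j \<noteq> m"
  shows "\<forall>v\<in>cmp m. A z v"
proof
  fix v assume v: "v \<in> cmp m"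
  obtain e where e: "e \<in> Es m" "v \<in> e" using cmp_cover v by blast
  obtain x y p q where h: "e={x,y}" "{u,w}={p,q}" "A x p" "A q x" "A y q" "A p y"
    "\<forall>z. z\<in>V \<longrightarrow> A x z \<longrightarrow> \<not> A z q" "\<forall>z. z\<in>V \<longrightarrow> A y z \<longrightarrow> \<not> A z p"
    using loses_cons[OF assms(1) e(1) assms(2)] by blast
  have zV: "z \<in> V" using assms cmp_V by blast
  have xy: "x \<in> cmp m" "y \<in> cmp m" using h e E_sub by blast+
  have "A z p" "A z q" using h(2) assms(3,4) by (auto simp: doubleton_eq_iff)
  then have "\<not> A x z" "\<not> A y z" using h(7,8) zV by blast+
  then have "A z x" "A z y"
    using adj[OF assms(1,5) assms(7)[symmetric] xy(1) assms(6)]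
      adj[OF assms(1,5) assms(7)[symmetric] xy(2) assms(6)] by blast+
  then show "A z v" using h(1) e(2) by auto
qed

lemma iterate:
  assumes "\<forall>m<k. Q m \<and> m \<noteq> t \<longrightarrow> Q (nx m)" "Q s" "s<k"
  shows "(\<forall>n'<n. (s+n') mod k \<noteq> t) \<Longrightarrow> Q ((s+n) mod k)"
proof (induction n)
  case 0 then show ?case using assms by simp
next
  case (Suc n)
  then have "Q ((s+n) mod k)" "(s+n) mod k \<noteq> t" by auto
  moreover have "(s+n) mod k < k" using k2 by simp
  ultimately have "Q (nx ((s+n) mod k))" using assms(1) by blast
  then show ?case unfolding nx_def by (simp add: mod_Suc_eq)
qed

lemma nx_prev: "j<k \<Longrightarrow> nx ((j + k - 1) mod k) = j"
proof -
  assume h: "j<k"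
  have "((j + k - 1) mod k + 1) mod k = (j + k - 1 + 1) mod k" by (simp add: mod_Suc_eq)
  also have "j + k - 1 + 1 = j + k" using h by simp
  finally show ?thesis unfolding nx_def using h by simp
qed

lemma Es_ab: "{a m, b m} \<in> Es m" unfolding Es_def by simp
lemma Es_ab_cmp: "a m \<in> cmp m" "b m \<in> cmp m" unfolding cmp_def by simp_all

lemma no_all_beat:
  assumes "i<k" "j<k" "i\<noteq>j" "z \<in> cmp j" "{u,w} \<in> Es i" "A u z" "A w z"
  shows False
proof -
  define Q where "Q m = (\<exists>u w. {u,w} \<in> Es m \<and> A u z \<and> A w z)" for m
  define t where "t = (j + k - 1) mod k"
  have tk: "t<k" unfolding t_def using assms(2) by simp
  have nt: "nx t = j" unfolding t_def using nx_prev assms(2) by simp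
  have Qi: "Q i" unfolding Q_def using assms by blast
  have step: "\<forall>m<k. Q m \<and> m \<noteq> t \<longrightarrow> Q (nx m)"
  proof (intro allI impI)
    fix m assume m: "m<k" "Q m \<and> m \<noteq> t"
    then obtain u' w' where uw: "{u',w'} \<in> Es m" "A u' z" "A w' z" unfolding Q_def by blast
    have "j \<noteq> nx m" using nx_inj[OF m(1) tk] nt m(2) by auto
    then have "\<forall>v\<in>cmp (nx m). A v z" using fwd[OF m(1) uw assms(2,4)] by blast
    then have "A (a (nx m)) z" "A (b (nx m)) z" using Es_ab_cmp by blast+
    then show "Q (nx m)" unfolding Q_def using Es_ab by blast
  qed
  define n where "n = (t + k - i) mod k"
  have "\<forall>n'<n. (i+n') mod k \<noteq> t" unfolding n_def using A2[OF assms(1) tk] by blast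
  then have "Q ((i+n) mod k)" using iterate[of Q t i n, OF step Qi assms(1)] by blast
  then have "Q t" unfolding n_def using A1[OF assms(1) tk] by simp
  then obtain u' w' where uw: "{u',w'} \<in> Es t" "A u' z" "A w' z" unfolding Q_def by blast
  have "z \<in> cmp (nx t)" using nt assms(4) by simp
  then show False using split1[OF tk uw(1)] uw(2,3) by blast
qed

lemma no_beat_all:
  assumes "i<k" "j<k" "i\<noteq>j" "z \<in> cmp j" "{u,w} \<in> Es i" "A z u" "A z w"
  shows False
proof -
  define R where "R m = (\<exists>u w. {u,w} \<in> Es m \<and> A z u \<and> A z w)" for m
  define Q where "Q m = (\<not> R m)" for m
  define s where "s = nx j"
  have sk: "s<k" unfolding s_def using nx_lt by simp
  have Qs: "Q s" unfolding Q_def R_def s_def using split2[OF assms(2) _ assms(4)] by blast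
  have step: "\<forall>m<k. Q m \<and> m \<noteq> j \<longrightarrow> Q (nx m)"
  proof (intro allI impI)
    fix m assume m: "m<k" "Q m \<and> m \<noteq> j"
    show "Q (nx m)"
    proof (rule ccontr)
      assume "\<not> Q (nx m)"
      then obtain u' w' where uw: "{u',w'} \<in> Es (nx m)" "A z u'" "A z w'" unfolding Q_def R_def by blast
      have "\<forall>v\<in>cmp m. A z v" using bwd[OF m(1) uw assms(2,4)] m(2) by blast
      then have "A z (a m)" "A z (b m)" using Es_ab_cmp by blast+
      then have "R m" unfolding R_def using Es_ab by blast
      then show False using m(2) unfolding Q_def by blast
    qed
  qed
  define n where "n = (i + k - s) mod k"
  have nk: "n < k" unfolding n_def using sk by simp
  have "\<forall>n'<n. (s+n') mod k \<noteq> j" unfolding s_def nx_def using A3[OF assms(2)] nk by auto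
  then have "Q ((s+n) mod k)" using iterate[of Q j s n, OF step Qs sk] by blast
  then have "Q i" unfolding n_def using A1[OF sk assms(1)] by simp
  moreover have "R i" unfolding R_def using assms by blast
  ultimately show False unfolding Q_def by blast
qed

lemma main:
  assumes "i<k" "j<k" "i\<noteq>j" "z \<in> cmp j" "{u,w} \<in> Es i"
  shows "A z u \<longleftrightarrow> A w z"
proof -
  have uw: "u \<in> cmp i" "w \<in> cmp i" using E_sub assms(5) by blast+
  have adj1: "A z u \<or> A u z" using adj[OF assms(2,1) assms(3)[symmetric] assms(4) uw(1)] .
  have adj2: "A z w \<or> A w z" using adj[OF assms(2,1) assms(3)[symmetric] assms(4) uw(2)] .
  have n1: "\<not> (A u z \<and> A w z)" using no_all_beat[OF assms] by blast
  have n2: "\<not> (A z u \<and> A z w)" using no_beat_all[OF assms] by blast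
  show ?thesis using n1 n2 adj1 adj2 by blast
qed

end

theorem corollary4p7:
  fixes V :: "'a set" and A :: "'a \<Rightarrow> 'a \<Rightarrow> bool" and k :: nat
    and a b c x y :: "nat \<Rightarrow> 'a"
  assumes "tournament_missing_P2 V A"
    and "double_cycle V A k a b c"
    and "\<forall>i < k. {x i, y i} = {a i, b i} \<or> {x i, y i} = {b i, c i}"
    and "j < k" and "i < k" and "i \<noteq> j"
  shows "(A (x j) (x i) \<longleftrightarrow> A (y i) (x j))
       \<and> (A (x j) (y i) \<longleftrightarrow> A (x i) (x j))
       \<and> (A (y j) (x i) \<longleftrightarrow> A (y i) (y j))
       \<and> (A (y j) (y i) \<longleftrightarrow> A (x i) (y j))"
proof -
  interpret dc V A k a b c using assms(1,2) by unfold_locales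
  have xj: "x j \<in> cmp j" "y j \<in> cmp j" using assms(3,4) unfolding cmp_def
    by (auto simp: doubleton_eq_iff)
  have e1: "{x i, y i} \<in> Es i" using assms(3,5) unfolding Es_def by auto
  have e2: "{y i, x i} \<in> Es i" using e1 by (simp add: insert_commute)
  show ?thesis
    using main[OF assms(5,4,6) xj(1) e1] main[OF assms(5,4,6) xj(1) e2]
      main[OF assms(5,4,6) xj(2) e1] main[OF assms(5,4,6) xj(2) e2] by blast
qed

end
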